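(* Let $X_1,X_2$ be locally compact Hausdorff spaces, $\mathcal{A}_i\subset\mathcal{C}_c(X_i)$ subalgebras, and $M_i,N_i$ uniform norms on $\mathcal{A}_i$ ($i=1,2$). If $M_1\preceq N_1$ and $M_2\preceq N_2$, then $M_1\otimes M_2\preceq N_1\otimes N_2$ on $\mathcal{A}_1\otimes\mathcal{A}_2$.
   Context: A norm $M$ on $\mathcal{A}\subset\mathcal{C}_c(X)$ is uniform if $\|\phi\|_\infty\le F\,M(\phi)$ for some constant $F$ and all $\phi$. For uniform norms on a subalgebra, $M\preceq N$ means there exist $D_1,D_2>0$ with $M(\phi_1)\le D_1N(\phi_1)$ and $M(\phi_1\phi_2)\le D_2N(\phi_1)N(\phi_2)$ for all $\phi_1,\phi_2$. $\mathcal{A}_1\otimes\mathcal{A}_2$ is the subalgebra of $\mathcal{C}_c(X_1\times X_2)$ of finite sums $\sum_i\phi_{1i}\otimes\phi_{2i}$, and $(M_1\otimes M_2)(\phi)=\inf\sum_iM_1(\phi_{1i})M_2(\phi_{2i})$ over all such representations of $\phi$ (projective tensor norm). *)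

theory Defs
  imports "HOL-Analysis.Analysis"
begin

definition Cc :: "('a::topological_space \<Rightarrow> complex) set" where
  "Cc = {f. continuous_on UNIV f \<and> compact (closure {x. f x \<noteq> 0})}"

definition subalgebra_Cc :: "('a::topological_space \<Rightarrow> complex) set \<Rightarrow> bool" where
  "subalgebra_Cc A \<longleftrightarrow> A \<subseteq> Cc \<and> (\<lambda>x. 0) \<in> A \<and>
     (\<forall>f\<in>A. \<forall>g\<in>A. (\<lambda>x. f x + g x) \<in> A \<and> (\<lambda>x. f x * g x) \<in> A) \<and>
     (\<forall>c. \<forall>f\<in>A. (\<lambda>x. c * f x) \<in> A)"

definition norm_on :: "('a \<Rightarrow> complex) set \<Rightarrow> (('a \<Rightarrow> complex) \<Rightarrow> real) \<Rightarrow> bool" where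
  "norm_on A M \<longleftrightarrow>
     (\<forall>f\<in>A. 0 \<le> M f \<and> (M f = 0 \<longleftrightarrow> f = (\<lambda>x. 0))) \<and>
     (\<forall>c. \<forall>f\<in>A. M (\<lambda>x. c * f x) = cmod c * M f) \<and>
     (\<forall>f\<in>A. \<forall>g\<in>A. M (\<lambda>x. f x + g x) \<le> M f + M g)"

definition sup_norm :: "('a \<Rightarrow> complex) \<Rightarrow> real" where
  "sup_norm f = (SUP x. cmod (f x))"

definition uniform_norm_on :: "('a \<Rightarrow> complex) set \<Rightarrow> (('a \<Rightarrow> complex) \<Rightarrow> real) \<Rightarrow> bool" where
  "uniform_norm_on A M \<longleftrightarrow> norm_on A M \<and> (\<exists>F. \<forall>f\<in>A. sup_norm f \<le> F * M f)"

definition norm_preceq :: "('a \<Rightarrow> complex) set \<Rightarrow> (('a \<Rightarrow> complex) \<Rightarrow> real) \<Rightarrow> (('a \<Rightarrow> complex) \<Rightarrow> real) \<Rightarrow> bool" where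
  "norm_preceq A M N \<longleftrightarrow> (\<exists>D1 D2. D1 > 0 \<and> D2 > 0 \<and>
     (\<forall>f\<in>A. M f \<le> D1 * N f) \<and>
     (\<forall>f\<in>A. \<forall>g\<in>A. M (\<lambda>x. f x * g x) \<le> D2 * N f * N g))"

text \<open>The function given by a finite representation (list of pairs) \<Sum>_i f_i \<otimes> g_i.\<close>
definition tensor_sum :: "(('a \<Rightarrow> complex) \<times> ('b \<Rightarrow> complex)) list \<Rightarrow> ('a \<times> 'b \<Rightarrow> complex)" where
  "tensor_sum rs = (\<lambda>(x, y). (\<Sum>r\<leftarrow>rs. fst r x * snd r y))"

definition tensor_reps ::
  "('a \<Rightarrow> complex) set \<Rightarrow> ('b \<Rightarrow> complex) set \<Rightarrow> ('a \<times> 'b \<Rightarrow> complex)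
     \<Rightarrow> (('a \<Rightarrow> complex) \<times> ('b \<Rightarrow> complex)) list set" where
  "tensor_reps A1 A2 \<phi> = {rs. set rs \<subseteq> A1 \<times> A2 \<and> tensor_sum rs = \<phi>}"

text \<open>The algebraic tensor product A1 \<otimes> A2 inside Cc(X1 \<times> X2).\<close>
definition tensor_alg :: "('a \<Rightarrow> complex) set \<Rightarrow> ('b \<Rightarrow> complex) set \<Rightarrow> ('a \<times> 'b \<Rightarrow> complex) set" where
  "tensor_alg A1 A2 = {\<phi>. tensor_reps A1 A2 \<phi> \<noteq> {}}"

definition tensor_norm ::
  "('a \<Rightarrow> complex) set \<Rightarrow> ('b \<Rightarrow> complex) set \<Rightarrow> (('a \<Rightarrow> complex) \<Rightarrow> real) \<Rightarrow> (('b \<Rightarrow> complex) \<Rightarrow> real)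
     \<Rightarrow> ('a \<times> 'b \<Rightarrow> complex) \<Rightarrow> real" where
  "tensor_norm A1 A2 M1 M2 \<phi> =
     Inf ((\<lambda>rs. \<Sum>r\<leftarrow>rs. M1 (fst r) * M2 (snd r)) ` tensor_reps A1 A2 \<phi>)"

end

theory Submission
  imports Defs
begin

lemma sum_list_concat_map2:
  "(\<Sum>p\<leftarrow>concat (map (\<lambda>r. map (\<lambda>s. e r s) ss) rs). h p) = (\<Sum>r\<leftarrow>rs. \<Sum>s\<leftarrow>ss. h (e r s))"
  by (induction rs) (simp_all add: o_def)

lemma sum_list_prod_split:
  fixes F :: "'a \<Rightarrow> 'c::comm_ring" 
  shows "(\<Sum>r\<leftarrow>rs. \<Sum>s\<leftarrow>ss. F r * G s) = (\<Sum>r\<leftarrow>rs. F r) * (\<Sum>s\<leftarrow>ss. G s)"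
  by (simp add: sum_list_const_mult sum_list_mult_const)

definition prodrep where
  "prodrep rs ss = concat (map (\<lambda>r. map (\<lambda>s. ((\<lambda>x. fst r x * fst s x), (\<lambda>y. snd r y * snd s y))) ss) rs)"

lemma tensor_sum_prodrep:
  "tensor_sum (prodrep rs ss) = (\<lambda>z. tensor_sum rs z * tensor_sum ss z)"
proof
  fix z :: "'a \<times> 'b" obtain x y where z: "z = (x,y)" by fastforce
  have "(\<Sum>r\<leftarrow>rs. \<Sum>s\<leftarrow>ss. (fst r x * fst s x) * (snd r y * snd s y))
      = (\<Sum>r\<leftarrow>rs. \<Sum>s\<leftarrow>ss. (fst r x * snd r y) * (fst s x * snd s y))"
    by (simp add: algebra_simps)
  also have "\<dots> = (\<Sum>r\<leftarrow>rs. fst r x * snd r y) * (\<Sum>s\<leftarrow>ss. fst s x * snd s y)"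
    by (rule sum_list_prod_split)
  finally show "tensor_sum (prodrep rs ss) z = tensor_sum rs z * tensor_sum ss z"
    unfolding z tensor_sum_def prodrep_def by (simp add: sum_list_concat_map2)
qed

lemma le_mult_Inf:
  fixes S :: "real set"
  assumes "S \<noteq> {}" "\<And>a. a \<in> S \<Longrightarrow> 0 \<le> a" "\<And>a. a \<in> S \<Longrightarrow> x \<le> c * a" "c \<ge> 0"
  shows "x \<le> c * Inf S"
proof (cases "c = 0")
  case True
  then show ?thesis using assms by auto
next
  case False
  then have c: "c > 0" using assms by auto
  have "x / c \<le> Inf S"
    by (rule cInf_greatest[OF assms(1)]) (use assms(3) c in \<open>simp add: divide_le_eq mult.commute\<close>)
  then show ?thesis using c by (simp add: divide_le_eq mult.commute)
qed

lemma Inf_nonneg_set: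
  fixes S :: "real set"
  assumes "S \<noteq> {}" "\<And>a. a \<in> S \<Longrightarrow> 0 \<le> a"
  shows "0 \<le> Inf S"
  by (rule cInf_greatest[OF assms(1)]) (use assms in auto)

theorem lemma6p2:
  fixes A1 :: "('a::t2_space \<Rightarrow> complex) set" and A2 :: "('b::t2_space \<Rightarrow> complex) set"
    and M1 N1 :: "('a \<Rightarrow> complex) \<Rightarrow> real" and M2 N2 :: "('b \<Rightarrow> complex) \<Rightarrow> real"
  assumes "locally_compact_space (euclidean :: 'a topology)"
    and "locally_compact_space (euclidean :: 'b topology)"
    and "subalgebra_Cc A1" and "subalgebra_Cc A2"
    and "uniform_norm_on A1 M1" and "uniform_norm_on A1 N1"
    and "uniform_norm_on A2 M2" and "uniform_norm_on A2 N2"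
    and "norm_preceq A1 M1 N1" and "norm_preceq A2 M2 N2"
  shows "norm_preceq (tensor_alg A1 A2) (tensor_norm A1 A2 M1 M2) (tensor_norm A1 A2 N1 N2)"
proof -
  obtain a1 b1 where ab1: "a1 > 0" "b1 > 0" "\<forall>f\<in>A1. M1 f \<le> a1 * N1 f"
    "\<forall>f\<in>A1. \<forall>g\<in>A1. M1 (\<lambda>x. f x * g x) \<le> b1 * N1 f * N1 g"
    using assms(9) unfolding norm_preceq_def by blast
  obtain a2 b2 where ab2: "a2 > 0" "b2 > 0" "\<forall>f\<in>A2. M2 f \<le> a2 * N2 f"
    "\<forall>f\<in>A2. \<forall>g\<in>A2. M2 (\<lambda>x. f x * g x) \<le> b2 * N2 f * N2 g"
    using assms(10) unfolding norm_preceq_def by blast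
  have M1p: "\<And>f. f \<in> A1 \<Longrightarrow> 0 \<le> M1 f" using assms(5) unfolding uniform_norm_on_def norm_on_def by blast
  have N1p: "\<And>f. f \<in> A1 \<Longrightarrow> 0 \<le> N1 f" using assms(6) unfolding uniform_norm_on_def norm_on_def by blast
  have M2p: "\<And>f. f \<in> A2 \<Longrightarrow> 0 \<le> M2 f" using assms(7) unfolding uniform_norm_on_def norm_on_def by blast
  have N2p: "\<And>f. f \<in> A2 \<Longrightarrow> 0 \<le> N2 f" using assms(8) unfolding uniform_norm_on_def norm_on_def by blast
  have mul1: "\<And>f g. f \<in> A1 \<Longrightarrow> g \<in> A1 \<Longrightarrow> (\<lambda>x. f x * g x) \<in> A1"
    using assms(3) unfolding subalgebra_Cc_def by blast
  have mul2: "\<And>f g. f \<in> A2 \<Longrightarrow> g \<in> A2 \<Longrightarrow> (\<lambda>x. f x * g x) \<in> A2"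
    using assms(4) unfolding subalgebra_Cc_def by blast
  define cM where "cM rs = (\<Sum>r\<leftarrow>rs. M1 (fst r) * M2 (snd r))" for rs :: "(('a \<Rightarrow> complex) \<times> ('b \<Rightarrow> complex)) list"
  define cN where "cN rs = (\<Sum>r\<leftarrow>rs. N1 (fst r) * N2 (snd r))" for rs :: "(('a \<Rightarrow> complex) \<times> ('b \<Rightarrow> complex)) list"
  have cMp: "0 \<le> cM rs" if "set rs \<subseteq> A1 \<times> A2" for rs
    unfolding cM_def using that M1p M2p by (intro sum_list_nonneg) (auto intro!: mult_nonneg_nonneg)
  have cNp: "0 \<le> cN rs" if "set rs \<subseteq> A1 \<times> A2" for rs
    unfolding cN_def using that N1p N2p by (intro sum_list_nonneg) (auto intro!: mult_nonneg_nonneg)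
  have TM: "tensor_norm A1 A2 M1 M2 \<phi> = Inf (cM ` tensor_reps A1 A2 \<phi>)" for \<phi>
    unfolding tensor_norm_def cM_def by simp
  have TN: "tensor_norm A1 A2 N1 N2 \<phi> = Inf (cN ` tensor_reps A1 A2 \<phi>)" for \<phi>
    unfolding tensor_norm_def cN_def by simp
  have lowM: "Inf (cM ` tensor_reps A1 A2 \<phi>) \<le> cM rs" if "rs \<in> tensor_reps A1 A2 \<phi>" for rs \<phi>
  proof (rule cInf_lower)
    show "cM rs \<in> cM ` tensor_reps A1 A2 \<phi>" using that by blast
    show "bdd_below (cM ` tensor_reps A1 A2 \<phi>)"
      by (rule bdd_belowI[where m=0]) (auto simp: tensor_reps_def intro: cMp)
  qed
  have cMN: "cM rs \<le> (a1*a2) * cN rs" if "set rs \<subseteq> A1 \<times> A2" for rs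
  proof -
    have "cM rs \<le> (\<Sum>r\<leftarrow>rs. (a1*a2) * (N1 (fst r) * N2 (snd r)))"
      unfolding cM_def
    proof (rule sum_list_mono)
      fix r assume "r \<in> set rs"
      then have r: "fst r \<in> A1" "snd r \<in> A2" using that by auto
      have "M1 (fst r) * M2 (snd r) \<le> (a1 * N1 (fst r)) * (a2 * N2 (snd r))"
        using r ab1 ab2 M1p M2p N1p N2p by (intro mult_mono) auto
      then show "M1 (fst r) * M2 (snd r) \<le> (a1*a2) * (N1 (fst r) * N2 (snd r))"
        by (simp add: algebra_simps)
    qed
    then show ?thesis unfolding cN_def by (simp add: sum_list_const_mult)
  qed
  have part1: "\<forall>\<phi>\<in>tensor_alg A1 A2. tensor_norm A1 A2 M1 M2 \<phi> \<le> (a1*a2) * tensor_norm A1 A2 N1 N2 \<phi>"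
  proof
    fix \<phi> assume "\<phi> \<in> tensor_alg A1 A2"
    then have ne: "tensor_reps A1 A2 \<phi> \<noteq> {}" unfolding tensor_alg_def by blast
    show "tensor_norm A1 A2 M1 M2 \<phi> \<le> (a1*a2) * tensor_norm A1 A2 N1 N2 \<phi>"
      unfolding TM TN
    proof (rule le_mult_Inf)
      show "cN ` tensor_reps A1 A2 \<phi> \<noteq> {}" using ne by blast
      show "0 \<le> x" if "x \<in> cN ` tensor_reps A1 A2 \<phi>" for x
        using that cNp by (auto simp: tensor_reps_def)
      show "Inf (cM ` tensor_reps A1 A2 \<phi>) \<le> (a1*a2) * x" if "x \<in> cN ` tensor_reps A1 A2 \<phi>" for x
        using that lowM cMN by (auto simp: tensor_reps_def) (meson order_trans)
      show "0 \<le> a1*a2" using ab1 ab2 by simp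
    qed
  qed
  have prep: "prodrep rs ss \<in> tensor_reps A1 A2 (\<lambda>z. \<phi> z * \<psi> z)"
    if "rs \<in> tensor_reps A1 A2 \<phi>" "ss \<in> tensor_reps A1 A2 \<psi>" for rs ss \<phi> \<psi>
  proof -
    have "set (prodrep rs ss) \<subseteq> A1 \<times> A2"
      using that unfolding tensor_reps_def prodrep_def
      by (auto intro!: mul1 mul2)
    moreover have "tensor_sum (prodrep rs ss) = (\<lambda>z. \<phi> z * \<psi> z)"
      using that unfolding tensor_reps_def by (simp add: tensor_sum_prodrep)
    ultimately show ?thesis unfolding tensor_reps_def by blast
  qed
  have cMprod: "cM (prodrep rs ss) \<le> (b1*b2) * cN rs * cN ss"
    if "set rs \<subseteq> A1 \<times> A2" "set ss \<subseteq> A1 \<times> A2" for rs ss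
  proof -
    have "cM (prodrep rs ss) = (\<Sum>r\<leftarrow>rs. \<Sum>s\<leftarrow>ss. M1 (\<lambda>x. fst r x * fst s x) * M2 (\<lambda>y. snd r y * snd s y))"
      unfolding cM_def prodrep_def by (simp add: sum_list_concat_map2)
    also have "\<dots> \<le> (\<Sum>r\<leftarrow>rs. \<Sum>s\<leftarrow>ss. ((b1*b2) * (N1 (fst r) * N2 (snd r))) * (N1 (fst s) * N2 (snd s)))"
    proof (intro sum_list_mono)
      fix r s assume rs: "r \<in> set rs" "s \<in> set ss"
      then have r: "fst r \<in> A1" "snd r \<in> A2" "fst s \<in> A1" "snd s \<in> A2" using that by auto
      have "M1 (\<lambda>x. fst r x * fst s x) * M2 (\<lambda>y. snd r y * snd s y)
          \<le> (b1 * N1 (fst r) * N1 (fst s)) * (b2 * N2 (snd r) * N2 (snd s))"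
        using r ab1 ab2 M1p M2p N1p N2p mul1 mul2 by (intro mult_mono) auto
      then show "M1 (\<lambda>x. fst r x * fst s x) * M2 (\<lambda>y. snd r y * snd s y)
          \<le> ((b1*b2) * (N1 (fst r) * N2 (snd r))) * (N1 (fst s) * N2 (snd s))"
        by (simp add: algebra_simps)
    qed
    also have "\<dots> = (\<Sum>r\<leftarrow>rs. (b1*b2) * (N1 (fst r) * N2 (snd r))) * (\<Sum>s\<leftarrow>ss. N1 (fst s) * N2 (snd s))"
      by (rule sum_list_prod_split)
    also have "\<dots> = (b1*b2) * cN rs * cN ss"
      unfolding cN_def by (simp add: sum_list_const_mult)
    finally show ?thesis .
  qed
  have part2: "\<forall>\<phi>\<in>tensor_alg A1 A2. \<forall>\<psi>\<in>tensor_alg A1 A2. tensor_norm A1 A2 M1 M2 (\<lambda>z. \<phi> z * \<psi> z)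
      \<le> (b1*b2) * tensor_norm A1 A2 N1 N2 \<phi> * tensor_norm A1 A2 N1 N2 \<psi>"
  proof (intro ballI)
    fix \<phi> \<psi> assume "\<phi> \<in> tensor_alg A1 A2" "\<psi> \<in> tensor_alg A1 A2"
    then have ne: "tensor_reps A1 A2 \<phi> \<noteq> {}" "tensor_reps A1 A2 \<psi> \<noteq> {}" unfolding tensor_alg_def by blast+
    let ?m = "Inf (cM ` tensor_reps A1 A2 (\<lambda>z. \<phi> z * \<psi> z))"
    have step: "?m \<le> ((b1*b2) * cN rs) * Inf (cN ` tensor_reps A1 A2 \<psi>)"
      if rs: "rs \<in> tensor_reps A1 A2 \<phi>" for rs
    proof (rule le_mult_Inf)
      show "cN ` tensor_reps A1 A2 \<psi> \<noteq> {}" using ne by blast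
      show "0 \<le> x" if "x \<in> cN ` tensor_reps A1 A2 \<psi>" for x
        using that cNp by (auto simp: tensor_reps_def)
      show "?m \<le> ((b1*b2) * cN rs) * x" if xin: "x \<in> cN ` tensor_reps A1 A2 \<psi>" for x
      proof -
        obtain ss where ss: "ss \<in> tensor_reps A1 A2 \<psi>" "x = cN ss" using xin by blast
        have "?m \<le> cM (prodrep rs ss)" by (rule lowM[OF prep[OF rs ss(1)]])
        also have "\<dots> \<le> (b1*b2) * cN rs * cN ss"
          using cMprod rs ss by (auto simp: tensor_reps_def)
        finally show ?thesis using ss by simp
      qed
      show "0 \<le> (b1*b2) * cN rs" using ab1 ab2 cNp rs by (auto simp: tensor_reps_def)
    qed
    have I2: "0 \<le> Inf (cN ` tensor_reps A1 A2 \<psi>)"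
      by (rule Inf_nonneg_set) (use ne cNp in \<open>auto simp: tensor_reps_def\<close>)
    have "?m \<le> ((b1*b2) * Inf (cN ` tensor_reps A1 A2 \<psi>)) * Inf (cN ` tensor_reps A1 A2 \<phi>)"
    proof (rule le_mult_Inf)
      show "cN ` tensor_reps A1 A2 \<phi> \<noteq> {}" using ne by blast
      show "0 \<le> x" if "x \<in> cN ` tensor_reps A1 A2 \<phi>" for x
        using that cNp by (auto simp: tensor_reps_def)
      show "?m \<le> ((b1*b2) * Inf (cN ` tensor_reps A1 A2 \<psi>)) * x" if "x \<in> cN ` tensor_reps A1 A2 \<phi>" for x
        using that step by (auto simp: algebra_simps)
      show "0 \<le> (b1*b2) * Inf (cN ` tensor_reps A1 A2 \<psi>)" using ab1 ab2 I2 by simp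
    qed
    then show "tensor_norm A1 A2 M1 M2 (\<lambda>z. \<phi> z * \<psi> z)
      \<le> (b1*b2) * tensor_norm A1 A2 N1 N2 \<phi> * tensor_norm A1 A2 N1 N2 \<psi>"
      unfolding TM TN by (simp add: algebra_simps)
  qed
  show ?thesis unfolding norm_preceq_def
    using part1 part2 ab1 ab2 by (intro exI[of _ "a1*a2"] exI[of _ "b1*b2"]) auto
qed

end
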